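(* For every integer $c \ge 4$ and every $n \ge 3$, there is no wait-free algorithm for the $c$-cycle agreement problem among $n$ processes in the non-uniform iterated immediate snapshot (NIIS) model.
   Context: Graphical approximate agreement on a connected undirected graph $G=(V,E)$ (known to all processes): each process $p_i$ receives an input vertex $x_i \in V$ and each process that does not crash must output a vertex $y_i \in V$ such that (agreement) any two output vertices are equal or adjacent in $G$, and (validity) every output vertex lies on some shortest path in $G$ between two (not necessarily distinct) input vertices. The $c$-cycle agreement problem is graphical approximate agreement on the cycle graph with vertices $0,1,\dots,c-1$ and edges $\{a,a+1 \bmod c\}$; every vertex is a possible input. NIIS model: processes $p_0,\dots,p_{n-1}$ communicate through an infinite sequence $S_1,S_2,\dots$ of single-writer atomic snapshot objects, each with $n$ components initially $-$; $\mathsf{update}(x)$ by $p_i$ sets component $i$ to $x$, and $\mathsf{scan}$ returns all components atomically. Initially the state of $p_i$ is its identifier and its input. The scheduler repeatedly selects a nonempty set of processes all poised to access the same snapshot object $S_r$; each of them performs $\mathsf{update}$ of its own component of $S_r$ with its current state, and then each of them performs one $\mathsf{scan}$ of $S_r$; its new state is its identifier together with the scan result. A deterministic function $\Delta$ of the state decides, after each scan, whether the process outputs a value (and terminates) or continues with the next snapshot object. An algorithm is wait-free if there is no infinite schedule from any initial configuration. *)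

theory Defs
  imports Main
begin

definition walk :: "'v set \<Rightarrow> ('v \<Rightarrow> 'v \<Rightarrow> bool) \<Rightarrow> 'v list \<Rightarrow> 'v \<Rightarrow> 'v \<Rightarrow> bool" where
  "walk V E p u w \<longleftrightarrow> p \<noteq> [] \<and> hd p = u \<and> last p = w \<and> set p \<subseteq> V \<and>
     (\<forall>k. Suc k < length p \<longrightarrow> E (p ! k) (p ! Suc k))"

definition shortest_path :: "'v set \<Rightarrow> ('v \<Rightarrow> 'v \<Rightarrow> bool) \<Rightarrow> 'v list \<Rightarrow> 'v \<Rightarrow> 'v \<Rightarrow> bool" where
  "shortest_path V E p u w \<longleftrightarrow> walk V E p u w \<and> (\<forall>q. walk V E q u w \<longrightarrow> length p \<le> length q)"

definition on_shortest_path :: "'v set \<Rightarrow> ('v \<Rightarrow> 'v \<Rightarrow> bool) \<Rightarrow> 'v \<Rightarrow> 'v \<Rightarrow> 'v \<Rightarrow> bool" where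
  "on_shortest_path V E v u w \<longleftrightarrow> (\<exists>p. shortest_path V E p u w \<and> v \<in> set p)"

definition cycle_V :: "nat \<Rightarrow> nat set" where
  "cycle_V c = {..<c}"

definition cycle_E :: "nat \<Rightarrow> nat \<Rightarrow> nat \<Rightarrow> bool" where
  "cycle_E c a b \<longleftrightarrow> a < c \<and> b < c \<and> (b = (a + 1) mod c \<or> a = (b + 1) mod c)"

text \<open>Process states: initially (identifier, input); after a scan,
  (identifier, scan result), the scan result being a vector of n components,
  each either "-" (None) or a state.\<close>

datatype state = Init nat nat | View nat "state option list"

record config =
  st  :: "nat \<Rightarrow> state"
  rnd :: "nat \<Rightarrow> nat"                   \<comment> \<open>index of the snapshot object the process is poised to access (0 = S_1)\<close>
  out :: "nat \<Rightarrow> nat option"            \<comment> \<open>output (Some y once the process has output y and terminated)\<close>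
  mem :: "nat \<Rightarrow> nat \<Rightarrow> state option"   \<comment> \<open>mem r j = component j of snapshot object S_(r+1)\<close>

definition init_config :: "(nat \<Rightarrow> nat) \<Rightarrow> config" where
  "init_config x = \<lparr> st = (\<lambda>i. Init i (x i)), rnd = (\<lambda>_. 0), out = (\<lambda>_. None),
                      mem = (\<lambda>_ _. None) \<rparr>"

definition niis_step :: "nat \<Rightarrow> (state \<Rightarrow> nat option) \<Rightarrow> config \<Rightarrow> nat set \<Rightarrow> config \<Rightarrow> bool" where
  "niis_step n \<Delta> C P C' \<longleftrightarrow>
     P \<noteq> {} \<and> P \<subseteq> {..<n} \<and> (\<forall>i\<in>P. out C i = None) \<and>
     (\<exists>r. (\<forall>i\<in>P. rnd C i = r) \<and>
        (let m' = (mem C)(r := (\<lambda>j. if j \<in> P then Some (st C j) else mem C r j));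
             view = (\<lambda>i. View i (map (\<lambda>j. m' r j) [0..<n]))
         in C' = \<lparr> st = (\<lambda>i. if i \<in> P then view i else st C i),
                   rnd = (\<lambda>i. if i \<in> P then Suc r else rnd C i),
                   out = (\<lambda>i. if i \<in> P then \<Delta> (view i) else out C i),
                   mem = m' \<rparr>))"

definition reachable :: "nat \<Rightarrow> (state \<Rightarrow> nat option) \<Rightarrow> (nat \<Rightarrow> nat) \<Rightarrow> config \<Rightarrow> bool" where
  "reachable n \<Delta> x C \<longleftrightarrow> (\<lambda>A B. \<exists>P. niis_step n \<Delta> A P B)\<^sup>*\<^sup>* (init_config x) C"

definition wait_free :: "nat \<Rightarrow> (state \<Rightarrow> nat option) \<Rightarrow> (nat \<Rightarrow> nat) set \<Rightarrow> bool" where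
  "wait_free n \<Delta> Inputs \<longleftrightarrow>
     (\<forall>x \<in> Inputs. \<not> (\<exists>Cs Ps. Cs 0 = init_config x \<and> (\<forall>k. niis_step n \<Delta> (Cs k) (Ps k) (Cs (Suc k)))))"

definition gaa_inputs :: "nat \<Rightarrow> nat set \<Rightarrow> (nat \<Rightarrow> nat) set" where
  "gaa_inputs n V = {x. \<forall>i<n. x i \<in> V}"

definition gaa_safe :: "nat \<Rightarrow> nat set \<Rightarrow> (nat \<Rightarrow> nat \<Rightarrow> bool) \<Rightarrow> (nat \<Rightarrow> nat) \<Rightarrow> config \<Rightarrow> bool" where
  "gaa_safe n V E x C \<longleftrightarrow>
     (\<forall>i<n. \<forall>y. out C i = Some y \<longrightarrow>
         y \<in> V \<and> (\<exists>j<n. \<exists>k<n. on_shortest_path V E y (x j) (x k))) \<and>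
     (\<forall>i<n. \<forall>j<n. \<forall>y z. out C i = Some y \<longrightarrow> out C j = Some z \<longrightarrow> y = z \<or> E y z)"

definition wait_free_solves_gaa :: "nat \<Rightarrow> nat set \<Rightarrow> (nat \<Rightarrow> nat \<Rightarrow> bool) \<Rightarrow> (state \<Rightarrow> nat option) \<Rightarrow> bool" where
  "wait_free_solves_gaa n V E \<Delta> \<longleftrightarrow>
     wait_free n \<Delta> (gaa_inputs n V) \<and>
     (\<forall>x \<in> gaa_inputs n V. \<forall>C. reachable n \<Delta> x C \<longrightarrow> gaa_safe n V E x C)"

end

theory Submission imports Defs begin

definition dd :: "nat \<Rightarrow> nat \<Rightarrow> nat \<Rightarrow> int" where
  "dd c a b = (if b = (a+1) mod c then 1 else if a = (b+1) mod c then -1 else 0)"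

lemma suc_mod_ne: "2 \<le> c \<Longrightarrow> y < c \<Longrightarrow> Suc y mod c \<noteq> y"
  by (metis Suc_lessI mod_less mod_self n_not_Suc_n not_less_eq numeral_2_eq_2 Suc_le_eq nat.distinct(1) le_less_trans lessI)

lemma dd_cong:
  assumes "2 \<le> c" "y < c" "z < c" "y = z \<or> cycle_E c y z"
  shows "(int y + dd c y z) mod int c = int z mod int c \<and> \<bar>dd c y z\<bar> \<le> 1"
proof -
  have zm: "int (Suc a mod c) = (int a + 1) mod int c" for a
    using zmod_int[of "Suc a" c] by (simp add: add.commute)
  show ?thesis
  proof (cases "y = z")
    case True
    have "z \<noteq> Suc z mod c" using suc_mod_ne[of c z] assms by auto
    then show ?thesis using True unfolding dd_def by auto
  next
    case False
    then have E: "z = Suc y mod c \<or> y = Suc z mod c" using assms unfolding cycle_E_def by auto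
    show ?thesis
    proof (cases "z = Suc y mod c")
      case True then show ?thesis unfolding dd_def using zm[of y] by (simp add: mod_simps)
    next
      case F: False
      have Y: "y = Suc z mod c" using E F by auto
      then have "int y mod int c = (int z + 1) mod int c" using zm[of z] by (metis assms(2) mod_less of_nat_less_iff zmod_int)
      then have "(int y - 1) mod int c = int z mod int c" by (metis add_diff_cancel_right' mod_diff_left_eq)
      moreover have "dd c y z = -1" unfolding dd_def using F Y by simp
      ultimately show ?thesis by simp
    qed
  qed
qed

lemma dd_tri:
  assumes "c \<ge> 4" "y0 < c" "y1 < c" "y2 < c"
    "y0 = y1 \<or> cycle_E c y0 y1" "y1 = y2 \<or> cycle_E c y1 y2" "y0 = y2 \<or> cycle_E c y0 y2"
  shows "dd c y0 y1 + dd c y1 y2 - dd c y0 y2 = 0"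
proof -
  have c2: "2 \<le> c" using assms by simp
  note a = dd_cong[OF c2 assms(2,3,5)] dd_cong[OF c2 assms(3,4,6)] dd_cong[OF c2 assms(2,4,7)]
  let ?s = "dd c y0 y1 + dd c y1 y2 - dd c y0 y2"
  have "(int y0 + ?s) mod int c = int y0 mod int c"
  proof -
    have "(int y0 + ?s) mod int c = ((int y0 + dd c y0 y1) + dd c y1 y2 - dd c y0 y2) mod int c" by (simp add: algebra_simps)
    also have "\<dots> = ((int y1 + dd c y1 y2) - dd c y0 y2) mod int c"
      using a(1) by (metis mod_add_left_eq mod_diff_left_eq)
    also have "\<dots> = (int y2 - dd c y0 y2) mod int c"
      using a(2) by (metis mod_diff_left_eq)
    also have "\<dots> = ((int y0 + dd c y0 y2) - dd c y0 y2) mod int c"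
      using a(3) by (metis mod_diff_left_eq)
    finally show ?thesis by simp
  qed
  then have "int c dvd ?s" by (metis mod_eq_dvd_iff add_diff_cancel_left')
  moreover have "\<bar>?s\<bar> < int c" using a assms(1) by linarith
  ultimately show ?thesis using dvd_imp_le_int[of ?s "int c"] by fastforce
qed


definition nstep :: "nat \<Rightarrow> (state \<Rightarrow> nat option) \<Rightarrow> config \<Rightarrow> nat set \<Rightarrow> nat \<Rightarrow> config" where
  "nstep n \<Delta> C P r = (let m' = (mem C)(r := (\<lambda>j. if j \<in> P then Some (st C j) else mem C r j));
             view = (\<lambda>i. View i (map (\<lambda>j. m' r j) [0..<n]))
         in \<lparr> st = (\<lambda>i. if i \<in> P then view i else st C i),
                   rnd = (\<lambda>i. if i \<in> P then Suc r else rnd C i),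
                   out = (\<lambda>i. if i \<in> P then \<Delta> (view i) else out C i),
                   mem = m' \<rparr>)"

lemma nstep_step: "P \<noteq> {} \<Longrightarrow> P \<subseteq> {..<n} \<Longrightarrow> \<forall>i\<in>P. out C i = None \<Longrightarrow> \<forall>i\<in>P. rnd C i = r
   \<Longrightarrow> niis_step n \<Delta> C P (nstep n \<Delta> C P r)"
  unfolding niis_step_def nstep_def Let_def by (intro conjI exI[of _ r]) auto

lemma mem_nstep: "mem (nstep n \<Delta> C P r) = (mem C)(r := (\<lambda>j. if j \<in> P then Some (st C j) else mem C r j))"
  by (simp add: nstep_def Let_def)
lemma st_nstep: "st (nstep n \<Delta> C P r) p = (if p \<in> P then View p (map (mem (nstep n \<Delta> C P r) r) [0..<n]) else st C p)"
  by (simp add: nstep_def Let_def)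
lemma out_nstep: "out (nstep n \<Delta> C P r) p = (if p \<in> P then \<Delta> (View p (map (mem (nstep n \<Delta> C P r) r) [0..<n])) else out C p)"
  by (simp add: nstep_def Let_def)
lemma rnd_nstep: "rnd (nstep n \<Delta> C P r) p = (if p \<in> P then Suc r else rnd C p)"
  by (simp add: nstep_def Let_def)

datatype endp = Dec nat | Act state

fun eok :: "config \<Rightarrow> nat \<Rightarrow> endp \<Rightarrow> nat \<Rightarrow> bool" where
  "eok C i (Dec y) r = (out C i = Some y)"
| "eok C i (Act s) r = (out C i = None \<and> st C i = s \<and> rnd C i = r)"

fun kap :: "nat set list \<Rightarrow> nat set \<Rightarrow> (nat \<Rightarrow> nat set) \<Rightarrow> nat \<Rightarrow> nat set" where
  "kap [] K \<kappa> = \<kappa>"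
| "kap (B#bs) K \<kappa> = kap bs (K \<union> B) (\<lambda>p. if p \<in> B then K \<union> B else \<kappa> p)"

fun valid :: "nat set list \<Rightarrow> nat set \<Rightarrow> nat set \<Rightarrow> bool" where
  "valid [] K A = (K = A)"
| "valid (B#bs) K A = (B \<noteq> {} \<and> B \<subseteq> A \<and> B \<inter> K = {} \<and> valid bs (K \<union> B) A)"

fun comb :: "int option \<Rightarrow> int option \<Rightarrow> int option \<Rightarrow> int option" where
  "comb (Some a) (Some b) (Some d) = Some (a - b + d)"
| "comb _ _ _ = None"

lemma comb_Some: "comb X Y Z = Some v \<longleftrightarrow> (\<exists>a b d. X = Some a \<and> Y = Some b \<and> Z = Some d \<and> v = a - b + d)"
  by (cases X; cases Y; cases Z) auto

lemma prepend:
  assumes "(\<lambda>A B. \<exists>P. niis_step n \<Delta> A P B)\<^sup>*\<^sup>* A B"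
    "\<exists>Cs Ps. Cs 0 = B \<and> (\<forall>k. niis_step n \<Delta> (Cs k) (Ps k) (Cs (Suc k)))"
  shows "\<exists>Cs Ps. Cs 0 = A \<and> (\<forall>k. niis_step n \<Delta> (Cs k) (Ps k) (Cs (Suc k)))"
  using assms(1,2)
proof (induction rule: converse_rtranclp_induct)
  case base then show ?case by simp
next
  case (step y z)
  then obtain P0 where P0: "niis_step n \<Delta> y P0 z" by blast
  from step obtain Cs Ps where cs: "Cs 0 = z" "\<forall>k. niis_step n \<Delta> (Cs k) (Ps k) (Cs (Suc k))" by blast
  let ?Cs = "\<lambda>k. case k of 0 \<Rightarrow> y | Suc k \<Rightarrow> Cs k"
  let ?Ps = "\<lambda>k. case k of 0 \<Rightarrow> P0 | Suc k \<Rightarrow> Ps k"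
  have "\<forall>k. niis_step n \<Delta> (?Cs k) (?Ps k) (?Cs (Suc k))"
  proof
    fix k show "niis_step n \<Delta> (?Cs k) (?Ps k) (?Cs (Suc k))"
      using P0 cs by (cases k) auto
  qed
  then show ?case by (intro exI[of _ ?Cs] exI[of _ ?Ps]) simp
qed

locale S =
  fixes n c :: nat and \<Delta> :: "state \<Rightarrow> nat option"
  assumes c4: "c \<ge> 4" and n3: "n \<ge> 3"
    and sol: "wait_free_solves_gaa n (cycle_V c) (cycle_E c) \<Delta>"
begin

abbreviation stp where "stp \<equiv> (\<lambda>A B. \<exists>P. niis_step n \<Delta> A P B)"

definition R where "R x = {(C', C). reachable n \<Delta> x C \<and> stp\<^sup>+\<^sup>+ C C'}"

lemma wfR:
  assumes x: "x \<in> gaa_inputs n (cycle_V c)"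
  shows "wf (R x)"
proof -
  let ?R1 = "{(C', C). reachable n \<Delta> x C \<and> stp C C'}"
  have sub: "R x \<subseteq> ?R1\<^sup>+"
  proof
    fix q assume "q \<in> R x"
    then obtain C C' where q: "q = (C', C)" and r: "reachable n \<Delta> x C" and t: "stp\<^sup>+\<^sup>+ C C'"
      unfolding R_def by auto
    have "(C', C) \<in> ?R1\<^sup>+" using t
    proof (induction rule: tranclp_induct)
      case (base y) then show ?case using r by auto
    next
      case (step y z)
      have "reachable n \<Delta> x y" using r step(1) unfolding reachable_def
        by (meson rtranclp_trans tranclp_into_rtranclp)
      then have "(z, y) \<in> ?R1" using step(2) by auto
      then show ?case using step(3) by (rule trancl_into_trancl2)
    qed
    then show "q \<in> ?R1\<^sup>+" using q by simp
  qed
  have "wf ?R1"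
    unfolding wf_iff_no_infinite_down_chain
  proof
    assume "\<exists>f. \<forall>i. (f (Suc i), f i) \<in> ?R1"
    then obtain f where f: "\<forall>i. (f (Suc i), f i) \<in> ?R1" by blast
    then have "\<forall>i. \<exists>P. niis_step n \<Delta> (f i) P (f (Suc i))" by auto
    then obtain Ps where Ps: "\<forall>i. niis_step n \<Delta> (f i) (Ps i) (f (Suc i))" by metis
    have "reachable n \<Delta> x (f 0)" using f by auto
    then have "\<exists>Cs Ps. Cs 0 = init_config x \<and> (\<forall>k. niis_step n \<Delta> (Cs k) (Ps k) (Cs (Suc k)))"
      unfolding reachable_def by (rule prepend) (use Ps in blast)
    moreover have "wait_free n \<Delta> (gaa_inputs n (cycle_V c))" using sol by (simp add: wait_free_solves_gaa_def)
    ultimately show False using x unfolding wait_free_def by blast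
  qed
  then show ?thesis by (rule wf_subset[OF wf_trancl sub])
qed

end
context S begin

definition vw :: "nat \<Rightarrow> nat set \<Rightarrow> (nat \<Rightarrow> state) \<Rightarrow> state" where
  "vw p K \<sigma> = View p (map (\<lambda>j. if j \<in> K then Some (\<sigma> j) else None) [0..<n])"

definition endv :: "state \<Rightarrow> endp" where
  "endv v = (case \<Delta> v of Some y \<Rightarrow> Dec y | None \<Rightarrow> Act v)"

abbreviation E where "E \<sigma> p K \<equiv> endv (vw p K \<sigma>)"

lemma vw_cong: "(\<And>q. q \<in> K \<Longrightarrow> \<sigma> q = \<sigma>' q) \<Longrightarrow> vw p K \<sigma> = vw p K \<sigma>'"
  unfolding vw_def by (auto intro: map_cong)

definition rlz where
  "rlz x C I e r = (reachable n \<Delta> x C \<and> (\<forall>i\<in>I. eok C i (e i) r) \<and> (\<forall>r'\<ge>r. \<forall>j. mem C r' j = None))"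

lemma rlz_mono: "rlz x C I e r \<Longrightarrow> J \<subseteq> I \<Longrightarrow> rlz x C J e r"
  unfolding rlz_def by blast

definition mid where
  "mid x C r \<sigma> A K \<kappa> = (reachable n \<Delta> x C \<and> (\<forall>j. mem C r j = (if j \<in> K then Some (\<sigma> j) else None))
     \<and> (\<forall>r'>r. \<forall>j. mem C r' j = None) \<and> (\<forall>p\<in>A-K. out C p = None \<and> rnd C p = r \<and> st C p = \<sigma> p)
     \<and> (\<forall>p\<in>K. st C p = vw p (\<kappa> p) \<sigma> \<and> out C p = \<Delta> (vw p (\<kappa> p) \<sigma>) \<and> rnd C p = Suc r))"

lemma mid_step:
  assumes m: "mid x C r \<sigma> A K \<kappa>" and B: "B \<noteq> {}" "B \<subseteq> A" "B \<inter> K = {}" and A: "A \<subseteq> {..<n}"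
  shows "stp C (nstep n \<Delta> C B r) \<and> mid x (nstep n \<Delta> C B r) r \<sigma> A (K \<union> B) (\<lambda>p. if p \<in> B then K \<union> B else \<kappa> p)
      \<and> (\<forall>p. p \<notin> B \<longrightarrow> out (nstep n \<Delta> C B r) p = out C p)"
proof -
  let ?C = "nstep n \<Delta> C B r"
  have act: "\<forall>p\<in>B. out C p = None \<and> rnd C p = r \<and> st C p = \<sigma> p" using m B unfolding mid_def by blast
  have step: "niis_step n \<Delta> C B ?C" using act B A by (intro nstep_step) auto
  have memr: "mem ?C r = (\<lambda>j. if j \<in> K \<union> B then Some (\<sigma> j) else None)"
    using m act unfolding mid_def by (auto simp: mem_nstep)
  have vB: "View p (map (mem ?C r) [0..<n]) = vw p (K \<union> B) \<sigma>" for p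
    unfolding memr vw_def by simp
  have st1: "stp C ?C" using step by blast
  have reach: "reachable n \<Delta> x ?C" using m unfolding mid_def reachable_def
    using rtranclp.rtrancl_into_rtrancl[of stp "init_config x" C ?C] st1 by blast
  have "mid x ?C r \<sigma> A (K \<union> B) (\<lambda>p. if p \<in> B then K \<union> B else \<kappa> p)"
    unfolding mid_def
  proof (intro conjI)
    show "\<forall>j. mem ?C r j = (if j \<in> K \<union> B then Some (\<sigma> j) else None)" using memr by simp
    show "\<forall>r'>r. \<forall>j. mem ?C r' j = None" using m unfolding mid_def by (simp add: mem_nstep)
    show "\<forall>p\<in>A - (K \<union> B). out ?C p = None \<and> rnd ?C p = r \<and> st ?C p = \<sigma> p"
      using m unfolding mid_def by (simp add: out_nstep rnd_nstep st_nstep)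
    show "\<forall>p\<in>K \<union> B. st ?C p = vw p (if p \<in> B then K \<union> B else \<kappa> p) \<sigma> \<and>
        out ?C p = \<Delta> (vw p (if p \<in> B then K \<union> B else \<kappa> p) \<sigma>) \<and> rnd ?C p = Suc r"
      using m unfolding mid_def by (auto simp: out_nstep rnd_nstep st_nstep vB)
  qed (fact reach)
  then show ?thesis using step by (auto simp: out_nstep)
qed

lemma run_blocks:
  "mid x C r \<sigma> A K \<kappa> \<Longrightarrow> valid bs K A \<Longrightarrow> A \<subseteq> {..<n} \<Longrightarrow>
   \<exists>C'. (if bs = [] then C' = C else stp\<^sup>+\<^sup>+ C C') \<and> mid x C' r \<sigma> A A (kap bs K \<kappa>)
        \<and> (\<forall>p. p \<notin> A \<longrightarrow> out C' p = out C p)"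
proof (induction bs arbitrary: C K \<kappa>)
  case Nil then show ?case by auto
next
  case (Cons B bs)
  then have v: "B \<noteq> {}" "B \<subseteq> A" "B \<inter> K = {}" "valid bs (K \<union> B) A" by auto
  let ?C1 = "nstep n \<Delta> C B r"
  have s1: "stp C ?C1" "mid x ?C1 r \<sigma> A (K \<union> B) (\<lambda>p. if p \<in> B then K \<union> B else \<kappa> p)"
    "\<forall>p. p \<notin> B \<longrightarrow> out ?C1 p = out C p"
    using mid_step[OF Cons.prems(1) v(1-3) Cons.prems(3)] by blast+
  obtain C' where c': "(if bs = [] then C' = ?C1 else stp\<^sup>+\<^sup>+ ?C1 C')"
    "mid x C' r \<sigma> A A (kap bs (K \<union> B) (\<lambda>p. if p \<in> B then K \<union> B else \<kappa> p))"
    "\<forall>p. p \<notin> A \<longrightarrow> out C' p = out ?C1 p"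
    using Cons.IH[OF s1(2) v(4) Cons.prems(3)] by blast
  have "stp\<^sup>+\<^sup>+ C C'"
  proof (cases "bs = []")
    case True then show ?thesis using c'(1) s1(1) by (auto intro: tranclp.r_into_trancl)
  next
    case False then show ?thesis using c'(1) s1(1) by (auto intro: tranclp_into_tranclp2)
  qed
  then show ?case using c' s1 v(2) by (intro exI[of _ C']) auto
qed

lemma round:
  assumes r: "rlz x C I e r" and A: "A \<subseteq> I" "A \<subseteq> {..<n}" "A \<noteq> {}"
    and act: "\<forall>p\<in>A. \<exists>s. e p = Act s" and dec: "\<forall>p\<in>I. p \<notin> A \<longrightarrow> (\<exists>y. e p = Dec y)"
    and v: "valid bs {} A"
  shows "\<exists>C'. (C', C) \<in> R x \<and> rlz x C' I (\<lambda>p. if p \<in> A then E (st C) p (kap bs {} (\<lambda>_. {}) p) else e p) (Suc r)"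
proof -
  have m: "mid x C r (st C) A {} (\<lambda>_. {})"
    unfolding mid_def
  proof (intro conjI)
    show "reachable n \<Delta> x C" using r unfolding rlz_def by blast
    show "\<forall>j. mem C r j = (if j \<in> {} then Some (st C j) else None)" using r unfolding rlz_def by simp
    show "\<forall>r'>r. \<forall>j. mem C r' j = None" using r unfolding rlz_def by simp
    show "\<forall>p\<in>A - {}. out C p = None \<and> rnd C p = r \<and> st C p = st C p"
    proof
      fix p assume p: "p \<in> A - {}"
      then obtain s where "e p = Act s" using act by blast
      then show "out C p = None \<and> rnd C p = r \<and> st C p = st C p"
        using r p A(1) unfolding rlz_def by (metis Diff_empty eok.simps(2) subsetD)
    qed
  qed simp
  have bs: "bs \<noteq> []" using v A(3) by (cases bs) auto
  obtain C' where c': "stp\<^sup>+\<^sup>+ C C'" "mid x C' r (st C) A A (kap bs {} (\<lambda>_. {}))"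
    "\<forall>p. p \<notin> A \<longrightarrow> out C' p = out C p"
    using run_blocks[OF m v A(2)] bs by auto
  have "(C', C) \<in> R x" using c'(1) r unfolding R_def rlz_def by auto
  moreover have "rlz x C' I (\<lambda>p. if p \<in> A then E (st C) p (kap bs {} (\<lambda>_. {}) p) else e p) (Suc r)"
    unfolding rlz_def
  proof (intro conjI ballI allI impI)
    show "reachable n \<Delta> x C'" using c'(2) unfolding mid_def by blast
    fix r' j assume "Suc r \<le> r'" then show "mem C' r' j = None" using c'(2) unfolding mid_def by auto
  next
    fix p assume p: "p \<in> I"
    show "eok C' p (if p \<in> A then E (st C) p (kap bs {} (\<lambda>_. {}) p) else e p) (Suc r)"
    proof (cases "p \<in> A")
      case True
      then have "st C' p = vw p (kap bs {} (\<lambda>_. {}) p) (st C) \<and> out C' p = \<Delta> (vw p (kap bs {} (\<lambda>_. {}) p) (st C))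
        \<and> rnd C' p = Suc r" using c'(2) unfolding mid_def by blast
      then show ?thesis using True by (auto simp: endv_def split: option.split)
    next
      case False
      then obtain y where "e p = Dec y" using dec p by blast
      then show ?thesis using False c'(3) r p unfolding rlz_def by auto
    qed
  qed
  ultimately show ?thesis by blast
qed

end

definition sg :: "nat \<Rightarrow> state \<Rightarrow> state \<Rightarrow> nat \<Rightarrow> state" where
  "sg i s t = (\<lambda>p. if p = i then s else t)"

context S begin

fun Df :: "nat \<Rightarrow> nat \<Rightarrow> nat \<Rightarrow> endp \<Rightarrow> endp \<Rightarrow> int option" where
  "Df 0 i j e f = None"
| "Df (Suc k) i j (Dec a) (Dec b) = Some (dd c a b)"
| "Df (Suc k) i j (Dec a) (Act t) = Df k i j (Dec a) (E (\<lambda>_. t) j {j})"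
| "Df (Suc k) i j (Act s) (Dec b) = Df k i j (E (\<lambda>_. s) i {i}) (Dec b)"
| "Df (Suc k) i j (Act s) (Act t) = comb (Df k i j (E (sg i s t) i {i}) (E (sg i s t) j {i,j}))
      (Df k i j (E (sg i s t) i {i,j}) (E (sg i s t) j {i,j})) (Df k i j (E (sg i s t) i {i,j}) (E (sg i s t) j {j}))"

lemma Df_mono1: "Df k i j e f = Some v \<Longrightarrow> Df (Suc k) i j e f = Some v"
proof (induction k arbitrary: e f v)
  case 0 then show ?case by simp
next
  case (Suc k) then show ?case
    by (cases e; cases f) (auto simp: comb_Some)
qed

lemma Df_mono: "k \<le> k' \<Longrightarrow> Df k i j e f = Some v \<Longrightarrow> Df k' i j e f = Some v"
  by (induction k' rule: dec_induct) (auto intro: Df_mono1)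

definition Dv where "Dv i j e f = (THE v. \<exists>k. Df k i j e f = Some v)"
definition Ddef where "Ddef i j e f = (\<exists>k v. Df k i j e f = Some v)"

lemma Dv_eq: assumes "Df k i j e f = Some v" shows "Dv i j e f = v"
  unfolding Dv_def
proof (rule the_equality)
  show "\<exists>k. Df k i j e f = Some v" using assms by blast
  fix v' assume "\<exists>k. Df k i j e f = Some v'"
  then obtain k' where k': "Df k' i j e f = Some v'" by blast
  have "Df (max k k') i j e f = Some v" using Df_mono[OF _ assms] by simp
  moreover have "Df (max k k') i j e f = Some v'" using Df_mono[OF _ k'] by simp
  ultimately show "v' = v" by simp
qed

lemma Ddef_D: "Ddef i j e f \<Longrightarrow> \<exists>k. Df k i j e f = Some (Dv i j e f)"
  unfolding Ddef_def using Dv_eq by metis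

lemma DvDD: "Ddef i j (Dec a) (Dec b) \<and> Dv i j (Dec a) (Dec b) = dd c a b"
proof -
  have "Df 1 i j (Dec a) (Dec b) = Some (dd c a b)" by (simp add: One_nat_def)
  then show ?thesis unfolding Ddef_def using Dv_eq by blast
qed

lemma DvDA:
  assumes "Ddef i j (Dec a) (E \<sigma> j {j})" "\<sigma> j = t"
  shows "Ddef i j (Dec a) (Act t) \<and> Dv i j (Dec a) (Act t) = Dv i j (Dec a) (E \<sigma> j {j})"
proof -
  have eq: "E (\<lambda>_. t) j {j} = E \<sigma> j {j}" using assms(2) by (metis singletonD vw_cong)
  obtain k where k: "Df k i j (Dec a) (E \<sigma> j {j}) = Some (Dv i j (Dec a) (E \<sigma> j {j}))"
    using Ddef_D[OF assms(1)] by blast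
  then have "Df (Suc k) i j (Dec a) (Act t) = Some (Dv i j (Dec a) (E \<sigma> j {j}))" using eq by simp
  then show ?thesis unfolding Ddef_def using Dv_eq by blast
qed

lemma DvAD:
  assumes "Ddef i j (E \<sigma> i {i}) (Dec b)" "\<sigma> i = s"
  shows "Ddef i j (Act s) (Dec b) \<and> Dv i j (Act s) (Dec b) = Dv i j (E \<sigma> i {i}) (Dec b)"
proof -
  have eq: "E (\<lambda>_. s) i {i} = E \<sigma> i {i}" using assms(2) by (metis singletonD vw_cong)
  obtain k where k: "Df k i j (E \<sigma> i {i}) (Dec b) = Some (Dv i j (E \<sigma> i {i}) (Dec b))"
    using Ddef_D[OF assms(1)] by blast
  then have "Df (Suc k) i j (Act s) (Dec b) = Some (Dv i j (E \<sigma> i {i}) (Dec b))" using eq by simp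
  then show ?thesis unfolding Ddef_def using Dv_eq by blast
qed

lemma DvAA:
  assumes ij: "i \<noteq> j" and s: "\<sigma> i = s" "\<sigma> j = t"
    and d: "Ddef i j (E \<sigma> i {i}) (E \<sigma> j {i,j})" "Ddef i j (E \<sigma> i {i,j}) (E \<sigma> j {i,j})"
      "Ddef i j (E \<sigma> i {i,j}) (E \<sigma> j {j})"
  shows "Ddef i j (Act s) (Act t) \<and> Dv i j (Act s) (Act t) =
     Dv i j (E \<sigma> i {i}) (E \<sigma> j {i,j}) - Dv i j (E \<sigma> i {i,j}) (E \<sigma> j {i,j}) + Dv i j (E \<sigma> i {i,j}) (E \<sigma> j {j})"
proof -
  have eq: "E (sg i s t) p K = E \<sigma> p K" if "K \<subseteq> {i,j}" for p K
    using that s ij by (intro arg_cong[where f=endv] vw_cong) (auto simp: sg_def)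
  obtain k1 where k1: "Df k1 i j (E \<sigma> i {i}) (E \<sigma> j {i,j}) = Some (Dv i j (E \<sigma> i {i}) (E \<sigma> j {i,j}))"
    using Ddef_D[OF d(1)] by blast
  obtain k2 where k2: "Df k2 i j (E \<sigma> i {i,j}) (E \<sigma> j {i,j}) = Some (Dv i j (E \<sigma> i {i,j}) (E \<sigma> j {i,j}))"
    using Ddef_D[OF d(2)] by blast
  obtain k3 where k3: "Df k3 i j (E \<sigma> i {i,j}) (E \<sigma> j {j}) = Some (Dv i j (E \<sigma> i {i,j}) (E \<sigma> j {j}))"
    using Ddef_D[OF d(3)] by blast
  let ?K = "max k1 (max k2 k3)"
  have "Df (Suc ?K) i j (Act s) (Act t) = Some (Dv i j (E \<sigma> i {i}) (E \<sigma> j {i,j}) - Dv i j (E \<sigma> i {i,j}) (E \<sigma> j {i,j}) + Dv i j (E \<sigma> i {i,j}) (E \<sigma> j {j}))"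
    using Df_mono[OF _ k1, of ?K] Df_mono[OF _ k2, of ?K] Df_mono[OF _ k3, of ?K]
    by (simp add: eq)
  then show ?thesis unfolding Ddef_def using Dv_eq by blast
qed

fun Sf :: "nat \<Rightarrow> nat \<Rightarrow> endp \<Rightarrow> nat option" where
  "Sf 0 i e = None"
| "Sf (Suc k) i (Dec y) = Some y"
| "Sf (Suc k) i (Act s) = Sf k i (E (\<lambda>_. s) i {i})"

lemma Sf_mono1: "Sf k i e = Some v \<Longrightarrow> Sf (Suc k) i e = Some v"
proof (induction k arbitrary: e v)
  case 0 then show ?case by simp
next
  case (Suc k) then show ?case by (cases e) auto
qed

lemma Sf_mono: "k \<le> k' \<Longrightarrow> Sf k i e = Some v \<Longrightarrow> Sf k' i e = Some v"
  by (induction k' rule: dec_induct) (auto intro: Sf_mono1)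

definition Sv where "Sv i e = (THE v. \<exists>k. Sf k i e = Some v)"
definition Sdef where "Sdef i e = (\<exists>k v. Sf k i e = Some v)"

lemma Sv_eq: assumes "Sf k i e = Some v" shows "Sv i e = v"
  unfolding Sv_def
proof (rule the_equality)
  show "\<exists>k. Sf k i e = Some v" using assms by blast
  fix v' assume "\<exists>k. Sf k i e = Some v'"
  then obtain k' where k': "Sf k' i e = Some v'" by blast
  have "Sf (max k k') i e = Some v" using Sf_mono[OF _ assms] by simp
  moreover have "Sf (max k k') i e = Some v'" using Sf_mono[OF _ k'] by simp
  ultimately show "v' = v" by simp
qed

lemma Sdef_S: "Sdef i e \<Longrightarrow> \<exists>k. Sf k i e = Some (Sv i e)"
  unfolding Sdef_def using Sv_eq by metis

lemma SvD: "Sdef i (Dec y) \<and> Sv i (Dec y) = y"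
proof -
  have "Sf 1 i (Dec y) = Some y" by (simp add: One_nat_def)
  then show ?thesis unfolding Sdef_def using Sv_eq by blast
qed

lemma SvA:
  assumes "Sdef i (E \<sigma> i {i})" "\<sigma> i = s"
  shows "Sdef i (Act s) \<and> Sv i (Act s) = Sv i (E \<sigma> i {i})"
proof -
  have eq: "E (\<lambda>_. s) i {i} = E \<sigma> i {i}" using assms(2) by (metis singletonD vw_cong)
  obtain k where k: "Sf k i (E \<sigma> i {i}) = Some (Sv i (E \<sigma> i {i}))"
    using Sdef_S[OF assms(1)] by blast
  then have "Sf (Suc k) i (Act s) = Some (Sv i (E \<sigma> i {i}))" using eq by simp
  then show ?thesis unfolding Sdef_def using Sv_eq by blast
qed

end

lemma sp_small:
  assumes "shortest_path V E p u w" "walk V E q u w" "length q \<le> 2"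
  shows "set p \<subseteq> {u, w}"
proof -
  have w: "walk V E p u w" and l: "length p \<le> length q" using assms(1,2) unfolding shortest_path_def by auto
  then have ne: "p \<noteq> []" "hd p = u" "last p = w" unfolding walk_def by auto
  have "length p \<le> 2" using l assms(3) by simp
  moreover have "length p \<noteq> 0" using ne(1) by simp
  ultimately consider "length p = 1" | "length p = 2" by linarith
  then show ?thesis
  proof cases
    case 1 then obtain a where "p = [a]" by (cases p) auto
    then show ?thesis using ne by auto
  next
    case 2 then obtain a b where "p = [a, b]" by (cases p; cases "tl p") auto
    then show ?thesis using ne by auto
  qed
qed

lemma osp_eq:
  assumes "a \<in> V" "on_shortest_path V E v a a" shows "v = a"
proof -
  obtain p where p: "shortest_path V E p a a" "v \<in> set p" using assms(2) unfolding on_shortest_path_def by blast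
  have "walk V E [a] a a" using assms(1) unfolding walk_def by auto
  from sp_small[OF p(1) this] p(2) show ?thesis by auto
qed

lemma osp_adj:
  assumes "a \<in> V" "b \<in> V" "E a b" "on_shortest_path V E v a b" shows "v = a \<or> v = b"
proof -
  obtain p where p: "shortest_path V E p a b" "v \<in> set p" using assms(4) unfolding on_shortest_path_def by blast
  have "walk V E [a, b] a b" using assms(1-3) unfolding walk_def by (auto simp: less_Suc_eq)
  from sp_small[OF p(1) this] p(2) show ?thesis by auto
qed

context S begin

lemma safe_out:
  assumes "x \<in> gaa_inputs n (cycle_V c)" "reachable n \<Delta> x C" "p < n" "out C p = Some y"
  shows "y < c \<and> (\<exists>j<n. \<exists>k<n. on_shortest_path (cycle_V c) (cycle_E c) y (x j) (x k))"
  using sol assms unfolding wait_free_solves_gaa_def gaa_safe_def cycle_V_def by blast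

lemma safe_agr:
  assumes "x \<in> gaa_inputs n (cycle_V c)" "reachable n \<Delta> x C" "p < n" "q < n" "out C p = Some y" "out C q = Some z"
  shows "y = z \<or> cycle_E c y z"
  using sol assms unfolding wait_free_solves_gaa_def gaa_safe_def by blast

lemma edge_def:
  assumes x: "x \<in> gaa_inputs n (cycle_V c)" and ij: "i \<noteq> j" "i < n" "j < n"
  shows "rlz x C {i,j} e r \<Longrightarrow> Ddef i j (e i) (e j)"
proof (induction C arbitrary: e r rule: wf_induct_rule[OF wfR[OF x]])
  case (1 C e r)
  have ch: "Ddef i j (if i \<in> A then E (st C) i (kap bs {} (\<lambda>_. {}) i) else e i)
                     (if j \<in> A then E (st C) j (kap bs {} (\<lambda>_. {}) j) else e j)"
    if as: "A \<subseteq> {i,j}" "A \<noteq> {}" "\<forall>p\<in>A. \<exists>s. e p = Act s" "\<forall>p\<in>{i,j}. p \<notin> A \<longrightarrow> (\<exists>y. e p = Dec y)"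
       "valid bs {} A" for A bs
  proof -
    have "A \<subseteq> {..<n}" using as(1) ij by auto
    then obtain C' where "(C', C) \<in> R x" "rlz x C' {i,j} (\<lambda>p. if p \<in> A then E (st C) p (kap bs {} (\<lambda>_. {}) p) else e p) (Suc r)"
      using round[OF "1.prems" as(1) _ as(2-5)] by blast
    then show ?thesis using "1.IH" by fastforce
  qed
  have stC: "e p = Act s \<Longrightarrow> p \<in> {i,j} \<Longrightarrow> st C p = s" for p s
    using "1.prems" unfolding rlz_def by (metis eok.simps(2))
  show ?case
  proof (cases "e i")
    case (Dec a) note ei = this
    show ?thesis
    proof (cases "e j")
      case (Dec b) then show ?thesis using ei DvDD by simp
    next
      case (Act t)
      have "Ddef i j (Dec a) (E (st C) j {j})" using ch[of "{j}" "[{j}]"] ei Act ij by simp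
      then show ?thesis using DvDA[of i j a "st C" t] stC[of j t] Act ei by simp
    qed
  next
    case (Act s) note ei = this
    show ?thesis
    proof (cases "e j")
      case (Dec b)
      have "Ddef i j (E (st C) i {i}) (Dec b)" using ch[of "{i}" "[{i}]"] ei Dec ij by simp
      then show ?thesis using DvAD[of i j "st C" b s] stC[of i s] Dec ei by simp
    next
      case (Act t)
      have d1: "Ddef i j (E (st C) i {i}) (E (st C) j {i,j})" using ch[of "{i,j}" "[{i},{j}]"] ei Act ij by auto
      have d2: "Ddef i j (E (st C) i {i,j}) (E (st C) j {i,j})" using ch[of "{i,j}" "[{i,j}]"] ei Act ij by auto
      have d3: "Ddef i j (E (st C) i {i,j}) (E (st C) j {j})" using ch[of "{i,j}" "[{j},{i}]"] ei Act ij
        by (auto simp: insert_commute)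
      show ?thesis using DvAA[OF ij(1) stC[of i s] stC[of j t] d1 d2 d3] ei Act by simp
    qed
  qed
qed

lemma solo:
  assumes x: "x \<in> gaa_inputs n (cycle_V c)" and i: "i < n"
  shows "rlz x C {i} e r \<Longrightarrow> Sdef i (e i) \<and> (\<exists>C'. reachable n \<Delta> x C' \<and> out C' i = Some (Sv i (e i)))"
proof (induction C arbitrary: e r rule: wf_induct_rule[OF wfR[OF x]])
  case (1 C e r)
  show ?case
  proof (cases "e i")
    case (Dec y)
    then show ?thesis using SvD "1.prems" unfolding rlz_def by auto
  next
    case (Act s)
    then have stC: "st C i = s" using "1.prems" unfolding rlz_def by auto
    obtain C' where "(C', C) \<in> R x" "rlz x C' {i} (\<lambda>p. if p \<in> {i} then E (st C) p (kap [{i}] {} (\<lambda>_. {}) p) else e p) (Suc r)"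
      using round[OF "1.prems", of "{i}" "[{i}]"] i Act by auto
    then have "Sdef i (E (st C) i {i}) \<and> (\<exists>C'. reachable n \<Delta> x C' \<and> out C' i = Some (Sv i (E (st C) i {i})))"
      using "1.IH" by fastforce
    then show ?thesis using SvA[of i "st C" s] stC Act by auto
  qed
qed

end

definition io :: "nat \<Rightarrow> nat \<Rightarrow> int" where "io a y = (if y = a then 0 else 1)"

lemma suc2_ne: "3 \<le> c \<Longrightarrow> a < c \<Longrightarrow> Suc (Suc a mod c) mod c \<noteq> a"
proof -
  assume c: "3 \<le> c" "a < c"
  have "Suc (Suc a mod c) mod c = (a + 2) mod c" by (simp add: mod_Suc_eq)
  moreover have "(a + 2) mod c \<noteq> a"
  proof
    assume h: "(a + 2) mod c = a"
    show False
    proof (cases "a + 2 < c")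
      case True then show False using h by simp
    next
      case False
      then have "(a + 2) mod c = a + 2 - c" using c by (simp add: mod_if le_mod_geq)
      then show False using h c False by linarith
    qed
  qed
  ultimately show ?thesis by simp
qed

lemma dd_two:
  assumes c: "3 \<le> c" "a < c" and y: "y = a \<or> y = Suc a mod c" and z: "z = a \<or> z = Suc a mod c"
  shows "dd c y z = io a z - io a y"
proof -
  have n1: "Suc a mod c \<noteq> a" using suc_mod_ne[of c a] c by simp
  have n2: "Suc (Suc a mod c) mod c \<noteq> Suc a mod c" using suc_mod_ne[of c "Suc a mod c"] c by simp
  have n3: "Suc (Suc a mod c) mod c \<noteq> a" using suc2_ne c by simp
  show ?thesis using y z n1 n2 n3 unfolding dd_def io_def by (auto simp del: mod_Suc)
qed

context S begin

lemma out_in: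
  assumes x: "x \<in> gaa_inputs n (cycle_V c)" and a: "a < c" and xa: "\<forall>p<n. x p = a \<or> x p = Suc a mod c"
    and r: "reachable n \<Delta> x C" "p < n" "out C p = Some y"
  shows "y = a \<or> y = Suc a mod c"
proof -
  obtain j k where jk: "j < n" "k < n" "on_shortest_path (cycle_V c) (cycle_E c) y (x j) (x k)"
    using safe_out[OF x r] by blast
  have V: "a \<in> cycle_V c" "Suc a mod c \<in> cycle_V c" using a c4 by (auto simp: cycle_V_def)
  have E1: "cycle_E c a (Suc a mod c)" "cycle_E c (Suc a mod c) a" using a c4 by (auto simp: cycle_E_def)
  consider "x j = x k" | "x j = a" "x k = Suc a mod c" | "x j = Suc a mod c" "x k = a"
    using xa jk by metis
  then show ?thesis
  proof cases
    case 1 then show ?thesis using osp_eq[of "x j" "cycle_V c" "cycle_E c" y] jk xa V by metis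
  next
    case 2 then show ?thesis using osp_adj[of a "cycle_V c" "Suc a mod c" "cycle_E c" y] V E1 jk by simp
  next
    case 3 then show ?thesis using osp_adj[of "Suc a mod c" "cycle_V c" a "cycle_E c" y] V E1 jk by auto
  qed
qed

lemma tele:
  assumes x: "x \<in> gaa_inputs n (cycle_V c)" and a: "a < c" and xa: "\<forall>p<n. x p = a \<or> x p = Suc a mod c"
  shows "rlz x C {0,1} e r \<Longrightarrow> Dv 0 1 (e 0) (e 1) = io a (Sv 1 (e 1)) - io a (Sv 0 (e 0))"
proof (induction C arbitrary: e r rule: wf_induct_rule[OF wfR[OF x]])
  case (1 C e r)
  let ?e' = "\<lambda>A bs p. if p \<in> A then E (st C) p (kap bs {} (\<lambda>_. {}) p) else e p"
  have ch: "Dv 0 1 (?e' A bs 0) (?e' A bs 1) = io a (Sv 1 (?e' A bs 1)) - io a (Sv 0 (?e' A bs 0))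
      \<and> Ddef 0 1 (?e' A bs 0) (?e' A bs 1) \<and> Sdef 0 (?e' A bs 0) \<and> Sdef 1 (?e' A bs 1)"
    if as: "A \<subseteq> {0,1}" "A \<noteq> {}" "\<forall>p\<in>A. \<exists>s. e p = Act s" "\<forall>p\<in>{0,1}. p \<notin> A \<longrightarrow> (\<exists>y. e p = Dec y)"
       "valid bs {} A" for A bs
  proof -
    have "A \<subseteq> {..<n}" using as(1) n3 by auto
    then obtain C' where C': "(C', C) \<in> R x" "rlz x C' {0,1} (?e' A bs) (Suc r)"
      using round[OF "1.prems" as(1) _ as(2-5)] by blast
    have "Ddef 0 1 (?e' A bs 0) (?e' A bs 1)" using edge_def[OF x _ _ _ C'(2)] n3 by simp
    moreover have "Sdef 0 (?e' A bs 0)" using solo[OF x _ rlz_mono[OF C'(2)], of 0] n3 by simp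
    moreover have "Sdef 1 (?e' A bs 1)" using solo[OF x _ rlz_mono[OF C'(2)], of 1] n3 by simp
    ultimately show ?thesis using "1.IH"[OF C'(1) C'(2)] by blast
  qed
  have stC: "e p = Act s \<Longrightarrow> p \<in> {0,1} \<Longrightarrow> st C p = s" for p s
    using "1.prems" unfolding rlz_def by (metis eok.simps(2))
  have outC: "e p = Dec y \<Longrightarrow> p \<in> {0,1} \<Longrightarrow> y = a \<or> y = Suc a mod c" for p y
    using "1.prems" out_in[OF x a xa, of C p y] n3 unfolding rlz_def by auto
  show ?case
  proof (cases "e 0")
    case (Dec y0) note e0 = this
    show ?thesis
    proof (cases "e 1")
      case (Dec y1)
      then show ?thesis using e0 DvDD SvD dd_two[of c a y0 y1] c4 a outC[of 0 y0] outC[of 1 y1] by simp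
    next
      case (Act t)
      have h: "Dv 0 1 (Dec y0) (E (st C) 1 {1}) = io a (Sv 1 (E (st C) 1 {1})) - io a (Sv 0 (Dec y0))
        \<and> Ddef 0 1 (Dec y0) (E (st C) 1 {1}) \<and> Sdef 1 (E (st C) 1 {1})"
        using ch[of "{1}" "[{1}]"] e0 Act by simp
      then show ?thesis using DvDA[of 0 1 y0 "st C" t] SvA[of 1 "st C" t] stC[of 1 t] Act e0 by simp
    qed
  next
    case (Act s0) note e0 = this
    show ?thesis
    proof (cases "e 1")
      case (Dec y1)
      have h: "Dv 0 1 (E (st C) 0 {0}) (Dec y1) = io a (Sv 1 (Dec y1)) - io a (Sv 0 (E (st C) 0 {0}))
        \<and> Ddef 0 1 (E (st C) 0 {0}) (Dec y1) \<and> Sdef 0 (E (st C) 0 {0})"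
        using ch[of "{0}" "[{0}]"] e0 Dec by simp
      then show ?thesis using DvAD[of 0 1 "st C" y1 s0] SvA[of 0 "st C" s0] stC[of 0 s0] Dec e0 by simp
    next
      case (Act s1)
      have h1: "Dv 0 1 (E (st C) 0 {0}) (E (st C) 1 {0,1}) = io a (Sv 1 (E (st C) 1 {0,1})) - io a (Sv 0 (E (st C) 0 {0}))
        \<and> Ddef 0 1 (E (st C) 0 {0}) (E (st C) 1 {0,1}) \<and> Sdef 0 (E (st C) 0 {0})"
        using ch[of "{0,1}" "[{0},{1}]"] e0 Act by (simp add: insert_commute)
      have h2: "Dv 0 1 (E (st C) 0 {0,1}) (E (st C) 1 {0,1}) = io a (Sv 1 (E (st C) 1 {0,1})) - io a (Sv 0 (E (st C) 0 {0,1}))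
        \<and> Ddef 0 1 (E (st C) 0 {0,1}) (E (st C) 1 {0,1})"
        using ch[of "{0,1}" "[{0,1}]"] e0 Act by (simp add: insert_commute)
      have h3: "Dv 0 1 (E (st C) 0 {0,1}) (E (st C) 1 {1}) = io a (Sv 1 (E (st C) 1 {1})) - io a (Sv 0 (E (st C) 0 {0,1}))
        \<and> Ddef 0 1 (E (st C) 0 {0,1}) (E (st C) 1 {1}) \<and> Sdef 1 (E (st C) 1 {1})"
        using ch[of "{0,1}" "[{1},{0}]"] e0 Act by (simp add: insert_commute)
      have "Dv 0 1 (Act s0) (Act s1) = io a (Sv 1 (Act s1)) - io a (Sv 0 (Act s0))"
        using DvAA[of 0 1 "st C" s0 s1] SvA[of 0 "st C" s0] SvA[of 1 "st C" s1] stC[of 0 s0] stC[of 1 s1]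
          h1 h2 h3 e0 Act by simp
      then show ?thesis using e0 Act by simp
    qed
  qed
qed

end
context S begin

definition W where "W e = Dv 0 1 (e 0) (e 1) + Dv 1 2 (e 1) (e 2) - Dv 0 2 (e 0) (e 2)"
definition TD where "TD e = (Ddef 0 1 (e 0) (e 1) \<and> Ddef 1 2 (e 1) (e 2) \<and> Ddef 0 2 (e 0) (e 2))"

lemma tri:
  assumes x: "x \<in> gaa_inputs n (cycle_V c)"
  shows "rlz x C {0,1,2} e r \<Longrightarrow> W e = 0"
proof (induction C arbitrary: e r rule: wf_induct_rule[OF wfR[OF x]])
  case (1 C e r)
  let ?e' = "\<lambda>A bs p. if p \<in> A then E (st C) p (kap bs {} (\<lambda>_. {}) p) else e p"
  have ch: "W (?e' A bs) = 0 \<and> TD (?e' A bs)"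
    if as: "A \<subseteq> {0,1,2}" "A \<noteq> {}" "\<forall>p\<in>A. \<exists>s. e p = Act s" "\<forall>p\<in>{0,1,2}. p \<notin> A \<longrightarrow> (\<exists>y. e p = Dec y)"
       "valid bs {} A" for A bs
  proof -
    have "A \<subseteq> {..<n}" using as(1) n3 by auto
    then obtain C' where C': "(C', C) \<in> R x" "rlz x C' {0,1,2} (?e' A bs) (Suc r)"
      using round[OF "1.prems" as(1) _ as(2-5)] by blast
    have "TD (?e' A bs)" unfolding TD_def
      using edge_def[OF x _ _ _ rlz_mono[OF C'(2), of "{0,1}"]]
            edge_def[OF x _ _ _ rlz_mono[OF C'(2), of "{1,2}"]]
            edge_def[OF x _ _ _ rlz_mono[OF C'(2), of "{0,2}"]] n3 by auto
    then show ?thesis using "1.IH"[OF C'(1) C'(2)] by blast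
  qed
  have stC: "e p = Act s \<Longrightarrow> p \<in> {0,1,2} \<Longrightarrow> st C p = s" for p s
    using "1.prems" unfolding rlz_def by (metis eok.simps(2))
  have reach: "reachable n \<Delta> x C" using "1.prems" unfolding rlz_def by blast
  have outC: "e p = Dec y \<Longrightarrow> p \<in> {0,1,2} \<Longrightarrow> out C p = Some y" for p y
    using "1.prems" unfolding rlz_def by (metis eok.simps(1))
  have base: "W e = 0" if "e 0 = Dec y0" "e 1 = Dec y1" "e 2 = Dec y2" for y0 y1 y2
  proof -
    have o: "out C 0 = Some y0" "out C 1 = Some y1" "out C 2 = Some y2" using outC that by auto
    have n': "0 < n" "1 < n" "2 < n" using n3 by auto
    have lt: "y0 < c" "y1 < c" "y2 < c" using safe_out[OF x reach] o n' by blast+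
    have ag: "y0 = y1 \<or> cycle_E c y0 y1" "y1 = y2 \<or> cycle_E c y1 y2" "y0 = y2 \<or> cycle_E c y0 y2"
      using safe_agr[OF x reach] o n' by blast+
    show ?thesis unfolding W_def using that DvDD dd_tri[OF c4 lt ag] by simp
  qed
  show ?case proof (cases "e 0")
    case (Dec y0) note e0 = this
    show ?thesis proof (cases "e 1")
      case (Dec y1) note e1 = this
      show ?thesis proof (cases "e 2")
        case (Dec y2) note e2 = this
        show ?thesis using base e0 e1 e2 by blast
      next
        case (Act s2) note e2 = this
      have c0: "Dv 0 1 (Dec y0) (Dec y1) + Dv 1 2 (Dec y1) (E (st C) 2 {2}) - Dv 0 2 (Dec y0) (E (st C) 2 {2}) = 0 \<and> Ddef 0 1 (Dec y0) (Dec y1) \<and> Ddef 1 2 (Dec y1) (E (st C) 2 {2}) \<and> Ddef 0 2 (Dec y0) (E (st C) 2 {2})"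
        using ch[of "{2}" "[{2}]"] e0 e1 e2 by (simp add: W_def TD_def insert_commute)
      have b12: "Dv 1 2 (Dec y1) (Act s2) = Dv 1 2 (Dec y1) (E (st C) 2 {2})"
        using DvDA[of 1 2 y1 "st C" s2] stC[of 2 s2] c0 e0 e1 e2 by simp
      have b02: "Dv 0 2 (Dec y0) (Act s2) = Dv 0 2 (Dec y0) (E (st C) 2 {2})"
        using DvDA[of 0 2 y0 "st C" s2] stC[of 2 s2] c0 e0 e1 e2 by simp
      have "Dv 0 1 (Dec y0) (Dec y1) + Dv 1 2 (Dec y1) (Act s2) - Dv 0 2 (Dec y0) (Act s2) = 0"
        using b12 b02 c0[THEN conjunct1] by linarith
      then show ?thesis unfolding W_def using e0 e1 e2 by simp
      qed
    next
      case (Act s1) note e1 = this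
      show ?thesis proof (cases "e 2")
        case (Dec y2) note e2 = this
      have c0: "Dv 0 1 (Dec y0) (E (st C) 1 {1}) + Dv 1 2 (E (st C) 1 {1}) (Dec y2) - Dv 0 2 (Dec y0) (Dec y2) = 0 \<and> Ddef 0 1 (Dec y0) (E (st C) 1 {1}) \<and> Ddef 1 2 (E (st C) 1 {1}) (Dec y2) \<and> Ddef 0 2 (Dec y0) (Dec y2)"
        using ch[of "{1}" "[{1}]"] e0 e1 e2 by (simp add: W_def TD_def insert_commute)
      have b01: "Dv 0 1 (Dec y0) (Act s1) = Dv 0 1 (Dec y0) (E (st C) 1 {1})"
        using DvDA[of 0 1 y0 "st C" s1] stC[of 1 s1] c0 e0 e1 e2 by simp
      have b12: "Dv 1 2 (Act s1) (Dec y2) = Dv 1 2 (E (st C) 1 {1}) (Dec y2)"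
        using DvAD[of 1 2 "st C" y2 s1] stC[of 1 s1] c0 e0 e1 e2 by simp
      have "Dv 0 1 (Dec y0) (Act s1) + Dv 1 2 (Act s1) (Dec y2) - Dv 0 2 (Dec y0) (Dec y2) = 0"
        using b01 b12 c0[THEN conjunct1] by linarith
      then show ?thesis unfolding W_def using e0 e1 e2 by simp
      next
        case (Act s2) note e2 = this
      have c0: "Dv 0 1 (Dec y0) (E (st C) 1 {1}) + Dv 1 2 (E (st C) 1 {1}) (E (st C) 2 {1,2}) - Dv 0 2 (Dec y0) (E (st C) 2 {1,2}) = 0 \<and> Ddef 0 1 (Dec y0) (E (st C) 1 {1}) \<and> Ddef 1 2 (E (st C) 1 {1}) (E (st C) 2 {1,2}) \<and> Ddef 0 2 (Dec y0) (E (st C) 2 {1,2})"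
        using ch[of "{1,2}" "[{1},{2}]"] e0 e1 e2 by (simp add: W_def TD_def insert_commute)
      have c1: "Dv 0 1 (Dec y0) (E (st C) 1 {1,2}) + Dv 1 2 (E (st C) 1 {1,2}) (E (st C) 2 {2}) - Dv 0 2 (Dec y0) (E (st C) 2 {2}) = 0 \<and> Ddef 0 1 (Dec y0) (E (st C) 1 {1,2}) \<and> Ddef 1 2 (E (st C) 1 {1,2}) (E (st C) 2 {2}) \<and> Ddef 0 2 (Dec y0) (E (st C) 2 {2})"
        using ch[of "{1,2}" "[{2},{1}]"] e0 e1 e2 by (simp add: W_def TD_def insert_commute)
      have c2: "Dv 0 1 (Dec y0) (E (st C) 1 {1,2}) + Dv 1 2 (E (st C) 1 {1,2}) (E (st C) 2 {1,2}) - Dv 0 2 (Dec y0) (E (st C) 2 {1,2}) = 0 \<and> Ddef 0 1 (Dec y0) (E (st C) 1 {1,2}) \<and> Ddef 1 2 (E (st C) 1 {1,2}) (E (st C) 2 {1,2}) \<and> Ddef 0 2 (Dec y0) (E (st C) 2 {1,2})"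
        using ch[of "{1,2}" "[{1,2}]"] e0 e1 e2 by (simp add: W_def TD_def insert_commute)
      have b01: "Dv 0 1 (Dec y0) (Act s1) = Dv 0 1 (Dec y0) (E (st C) 1 {1})"
        using DvDA[of 0 1 y0 "st C" s1] stC[of 1 s1] c0 c1 c2 e0 e1 e2 by simp
      have b12: "Dv 1 2 (Act s1) (Act s2) = Dv 1 2 (E (st C) 1 {1}) (E (st C) 2 {1,2}) - Dv 1 2 (E (st C) 1 {1,2}) (E (st C) 2 {1,2}) + Dv 1 2 (E (st C) 1 {1,2}) (E (st C) 2 {2})"
        using DvAA[of 1 2 "st C" s1 s2] stC[of 1 s1] stC[of 2 s2] c0 c1 c2 e0 e1 e2 by simp
      have b02: "Dv 0 2 (Dec y0) (Act s2) = Dv 0 2 (Dec y0) (E (st C) 2 {2})"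
        using DvDA[of 0 2 y0 "st C" s2] stC[of 2 s2] c0 c1 c2 e0 e1 e2 by simp
      have "Dv 0 1 (Dec y0) (Act s1) + Dv 1 2 (Act s1) (Act s2) - Dv 0 2 (Dec y0) (Act s2) = 0"
        using b01 b12 b02 c0[THEN conjunct1] c1[THEN conjunct1] c2[THEN conjunct1] by linarith
      then show ?thesis unfolding W_def using e0 e1 e2 by simp
      qed
    qed
  next
    case (Act s0) note e0 = this
    show ?thesis proof (cases "e 1")
      case (Dec y1) note e1 = this
      show ?thesis proof (cases "e 2")
        case (Dec y2) note e2 = this
      have c0: "Dv 0 1 (E (st C) 0 {0}) (Dec y1) + Dv 1 2 (Dec y1) (Dec y2) - Dv 0 2 (E (st C) 0 {0}) (Dec y2) = 0 \<and> Ddef 0 1 (E (st C) 0 {0}) (Dec y1) \<and> Ddef 1 2 (Dec y1) (Dec y2) \<and> Ddef 0 2 (E (st C) 0 {0}) (Dec y2)"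
        using ch[of "{0}" "[{0}]"] e0 e1 e2 by (simp add: W_def TD_def insert_commute)
      have b01: "Dv 0 1 (Act s0) (Dec y1) = Dv 0 1 (E (st C) 0 {0}) (Dec y1)"
        using DvAD[of 0 1 "st C" y1 s0] stC[of 0 s0] c0 e0 e1 e2 by simp
      have b02: "Dv 0 2 (Act s0) (Dec y2) = Dv 0 2 (E (st C) 0 {0}) (Dec y2)"
        using DvAD[of 0 2 "st C" y2 s0] stC[of 0 s0] c0 e0 e1 e2 by simp
      have "Dv 0 1 (Act s0) (Dec y1) + Dv 1 2 (Dec y1) (Dec y2) - Dv 0 2 (Act s0) (Dec y2) = 0"
        using b01 b02 c0[THEN conjunct1] by linarith
      then show ?thesis unfolding W_def using e0 e1 e2 by simp
      next
        case (Act s2) note e2 = this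
      have c0: "Dv 0 1 (E (st C) 0 {0}) (Dec y1) + Dv 1 2 (Dec y1) (E (st C) 2 {0,2}) - Dv 0 2 (E (st C) 0 {0}) (E (st C) 2 {0,2}) = 0 \<and> Ddef 0 1 (E (st C) 0 {0}) (Dec y1) \<and> Ddef 1 2 (Dec y1) (E (st C) 2 {0,2}) \<and> Ddef 0 2 (E (st C) 0 {0}) (E (st C) 2 {0,2})"
        using ch[of "{0,2}" "[{0},{2}]"] e0 e1 e2 by (simp add: W_def TD_def insert_commute)
      have c1: "Dv 0 1 (E (st C) 0 {0,2}) (Dec y1) + Dv 1 2 (Dec y1) (E (st C) 2 {2}) - Dv 0 2 (E (st C) 0 {0,2}) (E (st C) 2 {2}) = 0 \<and> Ddef 0 1 (E (st C) 0 {0,2}) (Dec y1) \<and> Ddef 1 2 (Dec y1) (E (st C) 2 {2}) \<and> Ddef 0 2 (E (st C) 0 {0,2}) (E (st C) 2 {2})"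
        using ch[of "{0,2}" "[{2},{0}]"] e0 e1 e2 by (simp add: W_def TD_def insert_commute)
      have c2: "Dv 0 1 (E (st C) 0 {0,2}) (Dec y1) + Dv 1 2 (Dec y1) (E (st C) 2 {0,2}) - Dv 0 2 (E (st C) 0 {0,2}) (E (st C) 2 {0,2}) = 0 \<and> Ddef 0 1 (E (st C) 0 {0,2}) (Dec y1) \<and> Ddef 1 2 (Dec y1) (E (st C) 2 {0,2}) \<and> Ddef 0 2 (E (st C) 0 {0,2}) (E (st C) 2 {0,2})"
        using ch[of "{0,2}" "[{0,2}]"] e0 e1 e2 by (simp add: W_def TD_def insert_commute)
      have b01: "Dv 0 1 (Act s0) (Dec y1) = Dv 0 1 (E (st C) 0 {0}) (Dec y1)"
        using DvAD[of 0 1 "st C" y1 s0] stC[of 0 s0] c0 c1 c2 e0 e1 e2 by simp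
      have b12: "Dv 1 2 (Dec y1) (Act s2) = Dv 1 2 (Dec y1) (E (st C) 2 {2})"
        using DvDA[of 1 2 y1 "st C" s2] stC[of 2 s2] c0 c1 c2 e0 e1 e2 by simp
      have b02: "Dv 0 2 (Act s0) (Act s2) = Dv 0 2 (E (st C) 0 {0}) (E (st C) 2 {0,2}) - Dv 0 2 (E (st C) 0 {0,2}) (E (st C) 2 {0,2}) + Dv 0 2 (E (st C) 0 {0,2}) (E (st C) 2 {2})"
        using DvAA[of 0 2 "st C" s0 s2] stC[of 0 s0] stC[of 2 s2] c0 c1 c2 e0 e1 e2 by simp
      have "Dv 0 1 (Act s0) (Dec y1) + Dv 1 2 (Dec y1) (Act s2) - Dv 0 2 (Act s0) (Act s2) = 0"
        using b01 b12 b02 c0[THEN conjunct1] c1[THEN conjunct1] c2[THEN conjunct1] by linarith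
      then show ?thesis unfolding W_def using e0 e1 e2 by simp
      qed
    next
      case (Act s1) note e1 = this
      show ?thesis proof (cases "e 2")
        case (Dec y2) note e2 = this
      have c0: "Dv 0 1 (E (st C) 0 {0}) (E (st C) 1 {0,1}) + Dv 1 2 (E (st C) 1 {0,1}) (Dec y2) - Dv 0 2 (E (st C) 0 {0}) (Dec y2) = 0 \<and> Ddef 0 1 (E (st C) 0 {0}) (E (st C) 1 {0,1}) \<and> Ddef 1 2 (E (st C) 1 {0,1}) (Dec y2) \<and> Ddef 0 2 (E (st C) 0 {0}) (Dec y2)"
        using ch[of "{0,1}" "[{0},{1}]"] e0 e1 e2 by (simp add: W_def TD_def insert_commute)
      have c1: "Dv 0 1 (E (st C) 0 {0,1}) (E (st C) 1 {1}) + Dv 1 2 (E (st C) 1 {1}) (Dec y2) - Dv 0 2 (E (st C) 0 {0,1}) (Dec y2) = 0 \<and> Ddef 0 1 (E (st C) 0 {0,1}) (E (st C) 1 {1}) \<and> Ddef 1 2 (E (st C) 1 {1}) (Dec y2) \<and> Ddef 0 2 (E (st C) 0 {0,1}) (Dec y2)"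
        using ch[of "{0,1}" "[{1},{0}]"] e0 e1 e2 by (simp add: W_def TD_def insert_commute)
      have c2: "Dv 0 1 (E (st C) 0 {0,1}) (E (st C) 1 {0,1}) + Dv 1 2 (E (st C) 1 {0,1}) (Dec y2) - Dv 0 2 (E (st C) 0 {0,1}) (Dec y2) = 0 \<and> Ddef 0 1 (E (st C) 0 {0,1}) (E (st C) 1 {0,1}) \<and> Ddef 1 2 (E (st C) 1 {0,1}) (Dec y2) \<and> Ddef 0 2 (E (st C) 0 {0,1}) (Dec y2)"
        using ch[of "{0,1}" "[{0,1}]"] e0 e1 e2 by (simp add: W_def TD_def insert_commute)
      have b01: "Dv 0 1 (Act s0) (Act s1) = Dv 0 1 (E (st C) 0 {0}) (E (st C) 1 {0,1}) - Dv 0 1 (E (st C) 0 {0,1}) (E (st C) 1 {0,1}) + Dv 0 1 (E (st C) 0 {0,1}) (E (st C) 1 {1})"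
        using DvAA[of 0 1 "st C" s0 s1] stC[of 0 s0] stC[of 1 s1] c0 c1 c2 e0 e1 e2 by simp
      have b12: "Dv 1 2 (Act s1) (Dec y2) = Dv 1 2 (E (st C) 1 {1}) (Dec y2)"
        using DvAD[of 1 2 "st C" y2 s1] stC[of 1 s1] c0 c1 c2 e0 e1 e2 by simp
      have b02: "Dv 0 2 (Act s0) (Dec y2) = Dv 0 2 (E (st C) 0 {0}) (Dec y2)"
        using DvAD[of 0 2 "st C" y2 s0] stC[of 0 s0] c0 c1 c2 e0 e1 e2 by simp
      have "Dv 0 1 (Act s0) (Act s1) + Dv 1 2 (Act s1) (Dec y2) - Dv 0 2 (Act s0) (Dec y2) = 0"
        using b01 b12 b02 c0[THEN conjunct1] c1[THEN conjunct1] c2[THEN conjunct1] by linarith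
      then show ?thesis unfolding W_def using e0 e1 e2 by simp
      next
        case (Act s2) note e2 = this
      have c0: "Dv 0 1 (E (st C) 0 {0}) (E (st C) 1 {0,1}) + Dv 1 2 (E (st C) 1 {0,1}) (E (st C) 2 {0,1,2}) - Dv 0 2 (E (st C) 0 {0}) (E (st C) 2 {0,1,2}) = 0 \<and> Ddef 0 1 (E (st C) 0 {0}) (E (st C) 1 {0,1}) \<and> Ddef 1 2 (E (st C) 1 {0,1}) (E (st C) 2 {0,1,2}) \<and> Ddef 0 2 (E (st C) 0 {0}) (E (st C) 2 {0,1,2})"
        using ch[of "{0,1,2}" "[{0},{1},{2}]"] e0 e1 e2 by (simp add: W_def TD_def insert_commute)
      have c1: "Dv 0 1 (E (st C) 0 {0}) (E (st C) 1 {0,1,2}) + Dv 1 2 (E (st C) 1 {0,1,2}) (E (st C) 2 {0,2}) - Dv 0 2 (E (st C) 0 {0}) (E (st C) 2 {0,2}) = 0 \<and> Ddef 0 1 (E (st C) 0 {0}) (E (st C) 1 {0,1,2}) \<and> Ddef 1 2 (E (st C) 1 {0,1,2}) (E (st C) 2 {0,2}) \<and> Ddef 0 2 (E (st C) 0 {0}) (E (st C) 2 {0,2})"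
        using ch[of "{0,1,2}" "[{0},{2},{1}]"] e0 e1 e2 by (simp add: W_def TD_def insert_commute)
      have c2: "Dv 0 1 (E (st C) 0 {0}) (E (st C) 1 {0,1,2}) + Dv 1 2 (E (st C) 1 {0,1,2}) (E (st C) 2 {0,1,2}) - Dv 0 2 (E (st C) 0 {0}) (E (st C) 2 {0,1,2}) = 0 \<and> Ddef 0 1 (E (st C) 0 {0}) (E (st C) 1 {0,1,2}) \<and> Ddef 1 2 (E (st C) 1 {0,1,2}) (E (st C) 2 {0,1,2}) \<and> Ddef 0 2 (E (st C) 0 {0}) (E (st C) 2 {0,1,2})"
        using ch[of "{0,1,2}" "[{0},{1,2}]"] e0 e1 e2 by (simp add: W_def TD_def insert_commute)
      have c3: "Dv 0 1 (E (st C) 0 {0,1}) (E (st C) 1 {1}) + Dv 1 2 (E (st C) 1 {1}) (E (st C) 2 {0,1,2}) - Dv 0 2 (E (st C) 0 {0,1}) (E (st C) 2 {0,1,2}) = 0 \<and> Ddef 0 1 (E (st C) 0 {0,1}) (E (st C) 1 {1}) \<and> Ddef 1 2 (E (st C) 1 {1}) (E (st C) 2 {0,1,2}) \<and> Ddef 0 2 (E (st C) 0 {0,1}) (E (st C) 2 {0,1,2})"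
        using ch[of "{0,1,2}" "[{1},{0},{2}]"] e0 e1 e2 by (simp add: W_def TD_def insert_commute)
      have c4: "Dv 0 1 (E (st C) 0 {0,1,2}) (E (st C) 1 {1}) + Dv 1 2 (E (st C) 1 {1}) (E (st C) 2 {1,2}) - Dv 0 2 (E (st C) 0 {0,1,2}) (E (st C) 2 {1,2}) = 0 \<and> Ddef 0 1 (E (st C) 0 {0,1,2}) (E (st C) 1 {1}) \<and> Ddef 1 2 (E (st C) 1 {1}) (E (st C) 2 {1,2}) \<and> Ddef 0 2 (E (st C) 0 {0,1,2}) (E (st C) 2 {1,2})"
        using ch[of "{0,1,2}" "[{1},{2},{0}]"] e0 e1 e2 by (simp add: W_def TD_def insert_commute)
      have c5: "Dv 0 1 (E (st C) 0 {0,1,2}) (E (st C) 1 {1}) + Dv 1 2 (E (st C) 1 {1}) (E (st C) 2 {0,1,2}) - Dv 0 2 (E (st C) 0 {0,1,2}) (E (st C) 2 {0,1,2}) = 0 \<and> Ddef 0 1 (E (st C) 0 {0,1,2}) (E (st C) 1 {1}) \<and> Ddef 1 2 (E (st C) 1 {1}) (E (st C) 2 {0,1,2}) \<and> Ddef 0 2 (E (st C) 0 {0,1,2}) (E (st C) 2 {0,1,2})"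
        using ch[of "{0,1,2}" "[{1},{0,2}]"] e0 e1 e2 by (simp add: W_def TD_def insert_commute)
      have c6: "Dv 0 1 (E (st C) 0 {0,2}) (E (st C) 1 {0,1,2}) + Dv 1 2 (E (st C) 1 {0,1,2}) (E (st C) 2 {2}) - Dv 0 2 (E (st C) 0 {0,2}) (E (st C) 2 {2}) = 0 \<and> Ddef 0 1 (E (st C) 0 {0,2}) (E (st C) 1 {0,1,2}) \<and> Ddef 1 2 (E (st C) 1 {0,1,2}) (E (st C) 2 {2}) \<and> Ddef 0 2 (E (st C) 0 {0,2}) (E (st C) 2 {2})"
        using ch[of "{0,1,2}" "[{2},{0},{1}]"] e0 e1 e2 by (simp add: W_def TD_def insert_commute)
      have c7: "Dv 0 1 (E (st C) 0 {0,1,2}) (E (st C) 1 {1,2}) + Dv 1 2 (E (st C) 1 {1,2}) (E (st C) 2 {2}) - Dv 0 2 (E (st C) 0 {0,1,2}) (E (st C) 2 {2}) = 0 \<and> Ddef 0 1 (E (st C) 0 {0,1,2}) (E (st C) 1 {1,2}) \<and> Ddef 1 2 (E (st C) 1 {1,2}) (E (st C) 2 {2}) \<and> Ddef 0 2 (E (st C) 0 {0,1,2}) (E (st C) 2 {2})"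
        using ch[of "{0,1,2}" "[{2},{1},{0}]"] e0 e1 e2 by (simp add: W_def TD_def insert_commute)
      have c8: "Dv 0 1 (E (st C) 0 {0,1,2}) (E (st C) 1 {0,1,2}) + Dv 1 2 (E (st C) 1 {0,1,2}) (E (st C) 2 {2}) - Dv 0 2 (E (st C) 0 {0,1,2}) (E (st C) 2 {2}) = 0 \<and> Ddef 0 1 (E (st C) 0 {0,1,2}) (E (st C) 1 {0,1,2}) \<and> Ddef 1 2 (E (st C) 1 {0,1,2}) (E (st C) 2 {2}) \<and> Ddef 0 2 (E (st C) 0 {0,1,2}) (E (st C) 2 {2})"
        using ch[of "{0,1,2}" "[{2},{0,1}]"] e0 e1 e2 by (simp add: W_def TD_def insert_commute)
      have c9: "Dv 0 1 (E (st C) 0 {0,1}) (E (st C) 1 {0,1}) + Dv 1 2 (E (st C) 1 {0,1}) (E (st C) 2 {0,1,2}) - Dv 0 2 (E (st C) 0 {0,1}) (E (st C) 2 {0,1,2}) = 0 \<and> Ddef 0 1 (E (st C) 0 {0,1}) (E (st C) 1 {0,1}) \<and> Ddef 1 2 (E (st C) 1 {0,1}) (E (st C) 2 {0,1,2}) \<and> Ddef 0 2 (E (st C) 0 {0,1}) (E (st C) 2 {0,1,2})"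
        using ch[of "{0,1,2}" "[{0,1},{2}]"] e0 e1 e2 by (simp add: W_def TD_def insert_commute)
      have c10: "Dv 0 1 (E (st C) 0 {0,2}) (E (st C) 1 {0,1,2}) + Dv 1 2 (E (st C) 1 {0,1,2}) (E (st C) 2 {0,2}) - Dv 0 2 (E (st C) 0 {0,2}) (E (st C) 2 {0,2}) = 0 \<and> Ddef 0 1 (E (st C) 0 {0,2}) (E (st C) 1 {0,1,2}) \<and> Ddef 1 2 (E (st C) 1 {0,1,2}) (E (st C) 2 {0,2}) \<and> Ddef 0 2 (E (st C) 0 {0,2}) (E (st C) 2 {0,2})"
        using ch[of "{0,1,2}" "[{0,2},{1}]"] e0 e1 e2 by (simp add: W_def TD_def insert_commute)
      have c11: "Dv 0 1 (E (st C) 0 {0,1,2}) (E (st C) 1 {1,2}) + Dv 1 2 (E (st C) 1 {1,2}) (E (st C) 2 {1,2}) - Dv 0 2 (E (st C) 0 {0,1,2}) (E (st C) 2 {1,2}) = 0 \<and> Ddef 0 1 (E (st C) 0 {0,1,2}) (E (st C) 1 {1,2}) \<and> Ddef 1 2 (E (st C) 1 {1,2}) (E (st C) 2 {1,2}) \<and> Ddef 0 2 (E (st C) 0 {0,1,2}) (E (st C) 2 {1,2})"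
        using ch[of "{0,1,2}" "[{1,2},{0}]"] e0 e1 e2 by (simp add: W_def TD_def insert_commute)
      have c12: "Dv 0 1 (E (st C) 0 {0,1,2}) (E (st C) 1 {0,1,2}) + Dv 1 2 (E (st C) 1 {0,1,2}) (E (st C) 2 {0,1,2}) - Dv 0 2 (E (st C) 0 {0,1,2}) (E (st C) 2 {0,1,2}) = 0 \<and> Ddef 0 1 (E (st C) 0 {0,1,2}) (E (st C) 1 {0,1,2}) \<and> Ddef 1 2 (E (st C) 1 {0,1,2}) (E (st C) 2 {0,1,2}) \<and> Ddef 0 2 (E (st C) 0 {0,1,2}) (E (st C) 2 {0,1,2})"
        using ch[of "{0,1,2}" "[{0,1,2}]"] e0 e1 e2 by (simp add: W_def TD_def insert_commute)
      have b01: "Dv 0 1 (Act s0) (Act s1) = Dv 0 1 (E (st C) 0 {0}) (E (st C) 1 {0,1}) - Dv 0 1 (E (st C) 0 {0,1}) (E (st C) 1 {0,1}) + Dv 0 1 (E (st C) 0 {0,1}) (E (st C) 1 {1})"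
        using DvAA[of 0 1 "st C" s0 s1] stC[of 0 s0] stC[of 1 s1] c0 c1 c2 c3 c4 c5 c6 c7 c8 c9 c10 c11 c12 e0 e1 e2 by simp
      have b12: "Dv 1 2 (Act s1) (Act s2) = Dv 1 2 (E (st C) 1 {1}) (E (st C) 2 {1,2}) - Dv 1 2 (E (st C) 1 {1,2}) (E (st C) 2 {1,2}) + Dv 1 2 (E (st C) 1 {1,2}) (E (st C) 2 {2})"
        using DvAA[of 1 2 "st C" s1 s2] stC[of 1 s1] stC[of 2 s2] c0 c1 c2 c3 c4 c5 c6 c7 c8 c9 c10 c11 c12 e0 e1 e2 by simp
      have b02: "Dv 0 2 (Act s0) (Act s2) = Dv 0 2 (E (st C) 0 {0}) (E (st C) 2 {0,2}) - Dv 0 2 (E (st C) 0 {0,2}) (E (st C) 2 {0,2}) + Dv 0 2 (E (st C) 0 {0,2}) (E (st C) 2 {2})"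
        using DvAA[of 0 2 "st C" s0 s2] stC[of 0 s0] stC[of 2 s2] c0 c1 c2 c3 c4 c5 c6 c7 c8 c9 c10 c11 c12 e0 e1 e2 by simp
      have "Dv 0 1 (Act s0) (Act s1) + Dv 1 2 (Act s1) (Act s2) - Dv 0 2 (Act s0) (Act s2) = 0"
        using b01 b12 b02 c0[THEN conjunct1] c1[THEN conjunct1] c2[THEN conjunct1] c3[THEN conjunct1] c4[THEN conjunct1] c5[THEN conjunct1] c6[THEN conjunct1] c7[THEN conjunct1] c8[THEN conjunct1] c9[THEN conjunct1] c10[THEN conjunct1] c11[THEN conjunct1] c12[THEN conjunct1] by linarith
      then show ?thesis unfolding W_def using e0 e1 e2 by simp
      qed
    qed
  qed
qed

end
context S begin

lemma init_rlz:
  assumes "\<forall>p<n. x p < c" "I \<subseteq> {..<n}"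
  shows "rlz x (init_config x) I (\<lambda>p. Act (Init p (x p))) 0"
  unfolding rlz_def reachable_def by (simp add: init_config_def)

lemma xin: "\<forall>p<n. x p < c \<Longrightarrow> x \<in> gaa_inputs n (cycle_V c)"
  by (simp add: gaa_inputs_def cycle_V_def)

lemma solo_init:
  assumes "a < c" "i < n"
  shows "Sv i (Act (Init i a)) = a"
proof -
  let ?x = "\<lambda>_::nat. a"
  have x: "?x \<in> gaa_inputs n (cycle_V c)" using assms by (simp add: xin)
  obtain C' where C': "reachable n \<Delta> ?x C'" "out C' i = Some (Sv i (Act (Init i a)))"
    using solo[OF x assms(2) init_rlz[of ?x "{i}"]] assms by auto
  obtain j k where "on_shortest_path (cycle_V c) (cycle_E c) (Sv i (Act (Init i a))) a a"
    using safe_out[OF x C'(1) assms(2) C'(2)] by auto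
  then show ?thesis using osp_eq[of a "cycle_V c"] assms by (auto simp: cycle_V_def)
qed

lemma tele_init:
  assumes a: "a < c" and b: "b = a \<or> b = Suc a mod c"
  shows "Dv 0 1 (Act (Init 0 a)) (Act (Init 1 b)) = io a b"
proof -
  let ?x = "\<lambda>p::nat. if p = 1 then b else a"
  have bc: "b < c" using b a by auto
  have x: "?x \<in> gaa_inputs n (cycle_V c)" using a bc by (intro xin) simp
  have xa: "\<forall>p<n. ?x p = a \<or> ?x p = Suc a mod c" using b by auto
  have "rlz ?x (init_config ?x) {0,1} (\<lambda>p. Act (Init p (?x p))) 0"
    using init_rlz[of ?x "{0,1}"] a bc n3 by auto
  from tele[OF x a xa this] have "Dv 0 1 (Act (Init 0 a)) (Act (Init 1 b)) =
      io a (Sv 1 (Act (Init 1 b))) - io a (Sv 0 (Act (Init 0 a)))" by simp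
  then show ?thesis using solo_init[OF a, of 0] solo_init[OF bc, of 1] n3 by (simp add: io_def)
qed

lemma tri_init:
  assumes "x0 < c" "x1 < c" "x2 < c"
  shows "Dv 0 1 (Act (Init 0 x0)) (Act (Init 1 x1)) + Dv 1 2 (Act (Init 1 x1)) (Act (Init 2 x2))
         - Dv 0 2 (Act (Init 0 x0)) (Act (Init 2 x2)) = 0"
proof -
  let ?x = "\<lambda>p::nat. if p = 0 then x0 else if p = 1 then x1 else x2"
  have x: "?x \<in> gaa_inputs n (cycle_V c)" using assms by (intro xin) simp
  have "rlz ?x (init_config ?x) {0,1,2} (\<lambda>p. Act (Init p (?x p))) 0"
    using init_rlz[of ?x "{0,1,2}"] assms n3 by auto
  from tri[OF x this] show ?thesis unfolding W_def by simp
qed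

lemma contra: False
proof -
  define f where "f a = Dv 0 2 (Act (Init 0 a)) (Act (Init 2 0))" for a
  define g where "g b = Dv 1 2 (Act (Init 1 b)) (Act (Init 2 0))" for b
  have c0: "0 < c" using c4 by simp
  have T: "Dv 0 1 (Act (Init 0 a)) (Act (Init 1 b)) = f a - g b" if "a < c" "b < c" for a b
    using tri_init[OF that c0] unfolding f_def g_def by linarith
  have fg: "f a = g a" if "a < c" for a
    using T[OF that that] tele_init[OF that, of a] by (simp add: io_def)
  have step: "f (Suc a mod c) = f a - 1" if "a < c" for a
  proof -
    have ne: "Suc a mod c \<noteq> a" using suc_mod_ne[of c a] c4 that by simp
    have lt: "Suc a mod c < c" using c0 by simp
    have "Dv 0 1 (Act (Init 0 a)) (Act (Init 1 (Suc a mod c))) = 1"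
      using tele_init[OF that, of "Suc a mod c"] ne by (simp add: io_def)
    then show ?thesis using T[OF that lt] fg[OF lt] by linarith
  qed
  have ind: "a < c \<Longrightarrow> f a = f 0 - int a" for a
  proof (induction a)
    case 0 then show ?case by simp
  next
    case (Suc a)
    then have "Suc a mod c = Suc a" by simp
    then show ?case using step[of a] Suc by simp
  qed
  have "Suc (c - 1) mod c = 0" using c0 by simp
  then have "f 0 = f (c - 1) - 1" using step[of "c - 1"] c0 by simp
  also have "\<dots> = f 0 - int (c - 1) - 1" using ind[of "c - 1"] c0 by simp
  finally show False using c4 by simp
qed

end

theorem mainTheorem1:
  fixes c n :: nat
  assumes "c \<ge> 4" and "n \<ge> 3"
  shows "\<not> (\<exists>\<Delta>. wait_free_solves_gaa n (cycle_V c) (cycle_E c) \<Delta>)"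
proof
  assume "\<exists>\<Delta>. wait_free_solves_gaa n (cycle_V c) (cycle_E c) \<Delta>"
  then obtain \<Delta> where d: "wait_free_solves_gaa n (cycle_V c) (cycle_E c) \<Delta>" by blast
  interpret S n c \<Delta> using assms d by unfold_locales
  show False by (rule contra)
qed

end
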